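(* Let $\mathfrak{R}$ be a complete rewriting system on $\Sigma$ that is cyclically terminating. If there are no rules in $\mathfrak{R}$ with cyclical overlaps or cyclical inclusions, then $\mathfrak{R}$ is cyclically confluent.
   Context: $\Sigma^*$ is the free monoid on $\Sigma$; a rewriting system is a set of rules $l\to r$ with $l,r\in\Sigma^*$, complete meaning terminating and confluent; $plq\to prq$ is one rewriting step. $u\simeq v$ means $u=ab$, $v=ba$ for some words $a,b$ (cyclic conjugates). $u\rightsquigarrow v$ means some cyclic conjugate $\tilde u$ of $u$ (possibly $u$) satisfies $\tilde u\to v$; $\rightsquigarrow^*$ is its reflexive–transitive closure. $\mathfrak{R}$ is cyclically terminating if there is no infinite sequence $u_1\rightsquigarrow u_2\rightsquigarrow\cdots$, and cyclically confluent if whenever $w\rightsquigarrow^* u$ and $w\rightsquigarrow^* v$ there exist $z\simeq z'$ with $u\rightsquigarrow^* z$ and $v\rightsquigarrow^* z'$. There is a cyclical overlap between two rules if they have the form $xuy\to u'$ and $yvx\to v'$ with $u',v'$ words, $u,v,x,y$ non-empty words, and $u'v$, $v'u$ not cyclic conjugates. There is a cyclical inclusion between rules $l\to v$ and $l'\to v'$ if either $l'\simeq l$ and $v,v'$ are not cyclic conjugates, or $l'$ is a proper subword of a cyclic conjugate $\ell_1$ of $l$, written $\ell_1=ul'$ with $u$ non-empty, and $v$ and $uv'$ are not cyclic conjugates. *)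

theory Defs
  imports Main
begin

type_synonym 'a rsys = "('a list \<times> 'a list) set"

definition rstep :: "'a rsys \<Rightarrow> 'a list \<Rightarrow> 'a list \<Rightarrow> bool" where
  "rstep R u v \<longleftrightarrow> (\<exists>p q l r. (l, r) \<in> R \<and> u = p @ l @ q \<and> v = p @ r @ q)"

definition terminating :: "'a rsys \<Rightarrow> bool" where
  "terminating R \<longleftrightarrow> \<not> (\<exists>f. \<forall>i. rstep R (f i) (f (Suc i)))"

definition confluent :: "'a rsys \<Rightarrow> bool" where
  "confluent R \<longleftrightarrow> (\<forall>w u v. (rstep R)\<^sup>*\<^sup>* w u \<and> (rstep R)\<^sup>*\<^sup>* w v \<longrightarrow>
      (\<exists>z. (rstep R)\<^sup>*\<^sup>* u z \<and> (rstep R)\<^sup>*\<^sup>* v z))"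

definition complete :: "'a rsys \<Rightarrow> bool" where
  "complete R \<longleftrightarrow> terminating R \<and> confluent R"

definition cyc_conj :: "'a list \<Rightarrow> 'a list \<Rightarrow> bool" where
  "cyc_conj u v \<longleftrightarrow> (\<exists>a b. u = a @ b \<and> v = b @ a)"

definition cstep :: "'a rsys \<Rightarrow> 'a list \<Rightarrow> 'a list \<Rightarrow> bool" where
  "cstep R u v \<longleftrightarrow> (\<exists>u'. cyc_conj u u' \<and> rstep R u' v)"

definition cyc_terminating :: "'a rsys \<Rightarrow> bool" where
  "cyc_terminating R \<longleftrightarrow> \<not> (\<exists>f. \<forall>i. cstep R (f i) (f (Suc i)))"

definition cyc_confluent :: "'a rsys \<Rightarrow> bool" where
  "cyc_confluent R \<longleftrightarrow> (\<forall>w u v. (cstep R)\<^sup>*\<^sup>* w u \<and> (cstep R)\<^sup>*\<^sup>* w v \<longrightarrow>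
      (\<exists>z z'. cyc_conj z z' \<and> (cstep R)\<^sup>*\<^sup>* u z \<and> (cstep R)\<^sup>*\<^sup>* v z'))"

definition cyc_overlap :: "'a list \<times> 'a list \<Rightarrow> 'a list \<times> 'a list \<Rightarrow> bool" where
  "cyc_overlap r1 r2 \<longleftrightarrow> (\<exists>x u y v. x \<noteq> [] \<and> u \<noteq> [] \<and> y \<noteq> [] \<and> v \<noteq> [] \<and>
      fst r1 = x @ u @ y \<and> fst r2 = y @ v @ x \<and> \<not> cyc_conj (snd r1 @ v) (snd r2 @ u))"

definition cyc_inclusion :: "'a list \<times> 'a list \<Rightarrow> 'a list \<times> 'a list \<Rightarrow> bool" where
  "cyc_inclusion r1 r2 \<longleftrightarrow>
     (cyc_conj (fst r2) (fst r1) \<and> \<not> cyc_conj (snd r1) (snd r2)) \<or>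
     (\<exists>l1 u. cyc_conj (fst r1) l1 \<and> u \<noteq> [] \<and> l1 = u @ fst r2 \<and>
        \<not> cyc_conj (snd r1) (u @ snd r2))"

end

theory Submission
  imports Defs
begin

lemma cc_rot: "cyc_conj u v \<longleftrightarrow> (\<exists>n. v = rotate n u)"
proof
  assume "cyc_conj u v"
  then obtain a b where "u = a @ b" "v = b @ a" unfolding cyc_conj_def by blast
  then show "\<exists>n. v = rotate n u" using rotate_append[of a b] by metis
next
  assume "\<exists>n. v = rotate n u"
  then obtain n where "v = rotate n u" by blast
  then show "cyc_conj u v" unfolding cyc_conj_def rotate_drop_take
    by (metis append_take_drop_id)
qed

lemma cc_refl: "cyc_conj u u"
  unfolding cyc_conj_def by (rule exI[of _ u], rule exI[of _ "[]"]) simp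

lemma cc_sym: "cyc_conj u v \<Longrightarrow> cyc_conj v u"
  unfolding cyc_conj_def by blast

lemma cc_trans: "cyc_conj u v \<Longrightarrow> cyc_conj v w \<Longrightarrow> cyc_conj u w"
  unfolding cc_rot by (metis rotate_rotate)

lemma cc_app: "cyc_conj (a @ b) (b @ a)"
  unfolding cyc_conj_def by blast

lemma cstep_conj: "cyc_conj x y \<Longrightarrow> cstep R y z \<Longrightarrow> cstep R x z"
  unfolding cstep_def using cc_trans by blast

lemma rstep_cstep: "rstep R x y \<Longrightarrow> cstep R x y"
  unfolding cstep_def using cc_refl by blast

lemma rsteps_csteps: "(rstep R)\<^sup>*\<^sup>* x y \<Longrightarrow> (cstep R)\<^sup>*\<^sup>* x y"
  by (induction rule: rtranclp_induct) (auto intro: rtranclp.rtrancl_into_rtrancl rstep_cstep)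

lemma transport:
  assumes "cyc_conj x y" "(cstep R)\<^sup>*\<^sup>* x x'"
  shows "\<exists>y'. (cstep R)\<^sup>*\<^sup>* y y' \<and> cyc_conj y' x'"
  using assms(2)
proof (cases rule: converse_rtranclpE)
  case base
  then show ?thesis using assms(1) cc_sym by blast
next
  case (step x1)
  then have "cstep R y x1" using cstep_conj[OF cc_sym[OF assms(1)]] by blast
  then show ?thesis using step cc_refl
    by (meson converse_rtranclp_into_rtranclp)
qed

definition J :: "'a rsys \<Rightarrow> 'a list \<Rightarrow> 'a list \<Rightarrow> bool" where
  "J R u v \<longleftrightarrow> (\<exists>z z'. cyc_conj z z' \<and> (cstep R)\<^sup>*\<^sup>* u z \<and> (cstep R)\<^sup>*\<^sup>* v z')"

lemma J_sym: "J R u v \<Longrightarrow> J R v u"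
  unfolding J_def using cc_sym by blast

lemma J_conj_left: assumes "J R u v" "cyc_conj u u'" shows "J R u' v"
proof -
  obtain z z' where zz: "cyc_conj z z'" "(cstep R)\<^sup>*\<^sup>* u z" "(cstep R)\<^sup>*\<^sup>* v z'"
    using assms(1) unfolding J_def by blast
  obtain y' where "(cstep R)\<^sup>*\<^sup>* u' y'" "cyc_conj y' z"
    using transport[OF assms(2) zz(2)] by blast
  then show ?thesis unfolding J_def using zz cc_trans by blast
qed

lemma J_conj: "J R u v \<Longrightarrow> cyc_conj u u' \<Longrightarrow> cyc_conj v v' \<Longrightarrow> J R u' v'"
  by (meson J_conj_left J_sym)

lemma J_of_conj: "cyc_conj u v \<Longrightarrow> J R u v"
  unfolding J_def by blast

lemma J_of_rsteps: "(rstep R)\<^sup>*\<^sup>* u z \<Longrightarrow> (rstep R)\<^sup>*\<^sup>* v z \<Longrightarrow> J R u v"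
  unfolding J_def using cc_refl rsteps_csteps by blast

lemma split_le:
  assumes "xs @ ys = zs @ ts" "length xs \<le> length zs"
  shows "\<exists>us. zs = xs @ us \<and> ys = us @ ts"
  using assms by (auto simp: append_eq_append_conv2)

lemma split_gt:
  assumes "xs @ ys = zs @ ts" "length zs < length xs"
  shows "\<exists>us. xs = zs @ us \<and> us @ ys = ts \<and> us \<noteq> []"
  using assms by (auto simp: append_eq_append_conv2)

lemma key:
  assumes conf: "confluent R"
    and ov: "\<forall>r1\<in>R. \<forall>r2\<in>R. \<not> cyc_overlap r1 r2"
    and inc: "\<forall>r1\<in>R. \<forall>r2\<in>R. \<not> cyc_inclusion r1 r2"
    and R1: "(l, r) \<in> R" and R2: "(l', r') \<in> R"
    and ab: "l @ s = a @ b" "l' @ s' = b @ a"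
  shows "J R (r @ s) (r' @ s')"
proof (cases "length l \<le> length a")
  case True
  then obtain m where m: "a = l @ m" "s = m @ b" using ab(1)
    using split_le[OF ab(1) True] by blast
  have "rstep R (b @ l @ m) (b @ r @ m)" unfolding rstep_def using R1 by blast
  moreover have "rstep R (b @ l @ m) (r' @ s')" unfolding rstep_def using R2 ab(2) m
    by (intro exI[of _ "[]"] exI[of _ s'] exI[of _ l'] exI[of _ r']) simp
  ultimately obtain z where "(rstep R)\<^sup>*\<^sup>* (b @ r @ m) z" "(rstep R)\<^sup>*\<^sup>* (r' @ s') z"
    using conf unfolding confluent_def by blast
  then have "J R (b @ r @ m) (r' @ s')" by (rule J_of_rsteps)
  moreover have "cyc_conj (b @ r @ m) (r @ s)" using m cc_app[of b "r @ m"] by simp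
  ultimately show ?thesis using J_conj cc_refl by blast
next
  case False
  then obtain c where c: "l = a @ c" "b = c @ s" "c \<noteq> []" using ab(1)
    using split_gt[OF ab(1)] by (metis not_le)
  have e: "l' @ s' = c @ s @ a" using ab(2) c by simp
  show ?thesis
  proof (cases "length l' \<le> length (c @ s)")
    case True
    then obtain t where t: "c @ s = l' @ t" "s' = t @ a" using e
      using split_le[of l' s' "c @ s" a] e True by auto
    have "rstep R (a @ l' @ t) (a @ r' @ t)" unfolding rstep_def using R2 by blast
    moreover have "rstep R (a @ l' @ t) (r @ s)" unfolding rstep_def using R1 c t
      by (intro exI[of _ "[]"] exI[of _ s] exI[of _ l] exI[of _ r]) simp
    ultimately obtain z where "(rstep R)\<^sup>*\<^sup>* (r @ s) z" "(rstep R)\<^sup>*\<^sup>* (a @ r' @ t) z"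
      using conf unfolding confluent_def by blast
    then have "J R (r @ s) (a @ r' @ t)" by (rule J_of_rsteps)
    moreover have "cyc_conj (a @ r' @ t) (r' @ s')" using t cc_app[of a "r' @ t"] by simp
    ultimately show ?thesis using J_conj cc_refl by blast
  next
    case False
    then obtain d where d: "l' = c @ s @ d" "a = d @ s'" "d \<noteq> []" using e
      using split_gt[of l' s' "c @ s" a] e False by (auto simp: not_le)
    have l: "l = d @ s' @ c" using c d by simp
    show ?thesis
    proof (cases "s = []")
      case s: True
      show ?thesis
      proof (cases "s' = []")
        case True
        have "cyc_conj l' l" using l d s True cc_app by simp
        moreover have "\<not> cyc_inclusion (l, r) (l', r')" using inc R1 R2 by blast
        ultimately have "cyc_conj r r'" unfolding cyc_inclusion_def by simp
        then show ?thesis using s True J_of_conj by simp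
      next
        case False
        have "cyc_conj l (s' @ l')" using l d s cc_app[of d "s' @ c"] by simp
        moreover have "\<not> cyc_inclusion (l, r) (l', r')" using inc R1 R2 by blast
        then have "\<forall>l1 u. \<not> (cyc_conj l l1 \<and> u \<noteq> [] \<and> l1 = u @ l' \<and> \<not> cyc_conj r (u @ r'))"
          unfolding cyc_inclusion_def by simp
        then have "\<not> (cyc_conj l (s' @ l') \<and> s' \<noteq> [] \<and> s' @ l' = s' @ l' \<and> \<not> cyc_conj r (s' @ r'))"
          by (elim allE)
        ultimately have "cyc_conj r (s' @ r')" using False by simp
        then have "cyc_conj r (r' @ s')" using cc_trans cc_app by blast
        then show ?thesis using s J_of_conj by simp
      qed
    next
      case s: False
      show ?thesis
      proof (cases "s' = []")
        case True
        have "cyc_conj l' (s @ l)" using l d True cc_app[of "c" "s @ d"] by simp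
        moreover have "\<not> cyc_inclusion (l', r') (l, r)" using inc R1 R2 by blast
        then have "\<forall>l1 u. \<not> (cyc_conj l' l1 \<and> u \<noteq> [] \<and> l1 = u @ l \<and> \<not> cyc_conj r' (u @ r))"
          unfolding cyc_inclusion_def by simp
        then have "\<not> (cyc_conj l' (s @ l) \<and> s \<noteq> [] \<and> s @ l = s @ l \<and> \<not> cyc_conj r' (s @ r))"
          by (elim allE)
        ultimately have "cyc_conj r' (s @ r)" using s by simp
        then have "cyc_conj (r @ s) r'" using cc_trans cc_app cc_sym by blast
        then show ?thesis using True J_of_conj by simp
      next
        case False
        have "\<not> cyc_overlap (l, r) (l', r')" using ov R1 R2 by blast
        then have "\<forall>x u y v. \<not> (x \<noteq> [] \<and> u \<noteq> [] \<and> y \<noteq> [] \<and> v \<noteq> [] \<and>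
            l = x @ u @ y \<and> l' = y @ v @ x \<and> \<not> cyc_conj (r @ v) (r' @ u))"
          unfolding cyc_overlap_def fst_conv snd_conv by blast
        then have "\<not> (d \<noteq> [] \<and> s' \<noteq> [] \<and> c \<noteq> [] \<and> s \<noteq> [] \<and>
            l = d @ s' @ c \<and> l' = c @ s @ d \<and> \<not> cyc_conj (r @ s) (r' @ s'))"
          by (elim allE)
        then have "cyc_conj (r @ s) (r' @ s')" using l d c s False by simp
        then show ?thesis using J_of_conj by blast
      qed
    qed
  qed
qed

lemma local_conf:
  assumes conf: "confluent R"
    and ov: "\<forall>r1\<in>R. \<forall>r2\<in>R. \<not> cyc_overlap r1 r2"
    and inc: "\<forall>r1\<in>R. \<forall>r2\<in>R. \<not> cyc_inclusion r1 r2"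
    and "cstep R w u" "cstep R w v"
  shows "J R u v"
proof -
  obtain w1 p l q r where 1: "cyc_conj w w1" "(l, r) \<in> R" "w1 = p @ l @ q" "u = p @ r @ q"
    using assms(4) unfolding cstep_def rstep_def by blast
  obtain w2 p' l' q' r' where 2: "cyc_conj w w2" "(l', r') \<in> R" "w2 = p' @ l' @ q'" "v = p' @ r' @ q'"
    using assms(5) unfolding cstep_def rstep_def by blast
  have "cyc_conj (l @ q @ p) w1" using 1(3) cc_app[of p "l @ q"] cc_sym by simp
  moreover have "cyc_conj w2 (l' @ q' @ p')" using 2(3) cc_app[of p' "l' @ q'"] by simp
  ultimately have "cyc_conj (l @ q @ p) (l' @ q' @ p')"
    using 1(1) 2(1) cc_trans cc_sym by blast
  then obtain a b where "l @ q @ p = a @ b" "l' @ q' @ p' = b @ a" unfolding cyc_conj_def by blast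
  then have "J R (r @ q @ p) (r' @ q' @ p')" using key[OF conf ov inc 1(2) 2(2)] by blast
  moreover have "cyc_conj (r @ q @ p) u" using 1(4) cc_app[of "r @ q" p] by simp
  moreover have "cyc_conj (r' @ q' @ p') v" using 2(4) cc_app[of "r' @ q'" p'] by simp
  ultimately show ?thesis using J_conj by blast
qed

lemma newman:
  assumes wf: "wf {(y, x). cstep R x y}"
    and lc: "\<forall>w u v. cstep R w u \<longrightarrow> cstep R w v \<longrightarrow> J R u v"
  shows "\<forall>u v. (cstep R)\<^sup>*\<^sup>* w u \<longrightarrow> (cstep R)\<^sup>*\<^sup>* w v \<longrightarrow> J R u v"
  using wf
proof (induction w rule: wf_induct_rule)
  case (less w)
  show ?case
  proof (intro allI impI)
    fix u v
    assume wu: "(cstep R)\<^sup>*\<^sup>* w u" and wv: "(cstep R)\<^sup>*\<^sup>* w v"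
    show "J R u v"
    proof (cases "u = w")
      case True
      then show ?thesis using wv cc_refl unfolding J_def by blast
    next
      case uF: False
      show ?thesis
      proof (cases "v = w")
        case True
        then show ?thesis using wu cc_refl unfolding J_def by blast
      next
        case False
        obtain u1 where u1: "cstep R w u1" "(cstep R)\<^sup>*\<^sup>* u1 u"
          using wu uF by (metis converse_rtranclpE)
        obtain v1 where v1: "cstep R w v1" "(cstep R)\<^sup>*\<^sup>* v1 v"
          using wv False by (metis converse_rtranclpE)
        obtain z1 z1' where z: "cyc_conj z1 z1'" "(cstep R)\<^sup>*\<^sup>* u1 z1" "(cstep R)\<^sup>*\<^sup>* v1 z1'"
          using lc[rule_format, OF u1(1) v1(1)] unfolding J_def by blast
        have "J R u z1" using less.IH[of u1] u1 z by blast
        then have "J R u z1'" using J_conj z(1) cc_refl by blast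
        then obtain a b where ab: "cyc_conj a b" "(cstep R)\<^sup>*\<^sup>* u a" "(cstep R)\<^sup>*\<^sup>* z1' b"
          unfolding J_def by blast
        have "(cstep R)\<^sup>*\<^sup>* v1 b" using z(3) ab(3) by simp
        then have "J R v b" using less.IH[of v1] v1 by blast
        then obtain c c' where cc: "cyc_conj c c'" "(cstep R)\<^sup>*\<^sup>* v c" "(cstep R)\<^sup>*\<^sup>* b c'"
          unfolding J_def by blast
        obtain c'' where "(cstep R)\<^sup>*\<^sup>* a c''" "cyc_conj c'' c'"
          using transport[OF cc_sym[OF ab(1)] cc(3)] by blast
        then show ?thesis unfolding J_def using ab(2) cc cc_trans cc_sym
          by (meson rtranclp_trans)
      qed
    qed
  qed
qed

theorem theorem5p9:
  fixes R :: "'a rsys"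
  assumes "complete R"
    and "cyc_terminating R"
    and "\<forall>r1\<in>R. \<forall>r2\<in>R. \<not> cyc_overlap r1 r2"
    and "\<forall>r1\<in>R. \<forall>r2\<in>R. \<not> cyc_inclusion r1 r2"
  shows "cyc_confluent R"
proof -
  have wf: "wf {(y, x). cstep R x y}"
    using assms(2) unfolding cyc_terminating_def wf_iff_no_infinite_down_chain by auto
  have conf: "confluent R" using assms(1) unfolding complete_def by blast
  have lc: "\<forall>w u v. cstep R w u \<longrightarrow> cstep R w v \<longrightarrow> J R u v"
    using local_conf[OF conf assms(3) assms(4)] by blast
  show ?thesis unfolding cyc_confluent_def
  proof (intro allI impI)
    fix w u v
    assume A: "(cstep R)\<^sup>*\<^sup>* w u \<and> (cstep R)\<^sup>*\<^sup>* w v"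
    have "J R u v" using newman[OF wf lc, where w = w, rule_format, OF conjunct1[OF A] conjunct2[OF A]] .
    then show "\<exists>z z'. cyc_conj z z' \<and> (cstep R)\<^sup>*\<^sup>* u z \<and> (cstep R)\<^sup>*\<^sup>* v z'"
      unfolding J_def .
  qed
qed

end
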